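(* Let $G$ be an $(N,k)$ Adinkra obtained from an $N$-cube Adinkra by quotienting by a doubly even $(N,k)$ code $C$ (vertices labeled by cosets $x+C$), with the matrices $\gamma_i$ defined as in the context. Let $M=\gamma_{i_1}\cdots\gamma_{i_t}$ and let $p\in\mathbb{Z}_2^N$ be the vector with $p_i=1$ exactly for the colors $i$ occurring an odd number of times in $(i_1,\dots,i_t)$. Suppose $p$ is a nonzero codeword of $C$ and $M_{x,x}=\pm1$ for all vertices $x$. Then for any two vertices $x+C$ and $y+C$, $M_{x+C,x+C}=M_{y+C,y+C}$ if and only if $\langle x,p\rangle\equiv\langle y,p\rangle\pmod 2$.
   Context: An Adinkra of dimension $N$ is a finite connected simple graph $G=(V,E)$ with: a bipartition of $V$ into bosons and fermions (every edge joins a boson and a fermion); a height function (irrelevant here); a coloring of $E$ by colors $\{1,\dots,N\}$ such that each vertex is incident to exactly one edge of each color; an edge parity $\pi:E\to\mathbb{Z}_2$ (parity $1$ = dashed); such that every path with edge colors $(i,j)$, $i\ne j$, lies in a unique 4-cycle with colors $(i,j,i,j)$, each having an odd number of dashed edges. If $|V|=2^{N-k}$, $G$ is an $(N,k)$ Adinkra; it has $n=2^{N-k-1}$ bosons $b_1,\dots,b_n$ and $n$ fermions $f_1,\dots,f_n$. A doubly even $(N,k)$ code $C$ is a $k$-dimensional subspace of $\mathbb{Z}_2^N$ all of whose elements have weight $\equiv0\pmod4$; $\langle u,v\rangle=\sum_iu_iv_i\bmod2$, and $\langle x,c\rangle$ for $c\in C$ depends only on $x+C$. Quotient construction: label the vertices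 of an $N$-cube Adinkra by $\mathbb{Z}_2^N$ so that color-$i$ edges join $v$ and $v+e_i$, and identify vertices whose labels differ by elements of $C$; the result has vertices $x+C$ and color-$i$ edges joining $x+C$ and $x+e_i+C$. For each color $i$, $L_i$ is the $n\times n$ matrix with $(L_i)_{r,s}=+1$ if $b_r,f_s$ are joined by a solid edge of color $i$, $-1$ if joined by a dashed edge of color $i$, $0$ otherwise; $\gamma_i=\begin{pmatrix}0&L_i\\ L_i^{T}&0\end{pmatrix}$, rows and columns indexed by $V$. *)

theory Defs
  imports Main
begin

text \<open>Vectors of Z_2^N are represented as subsets of {..<N} (the support);
  addition is symmetric difference, the unit vector e_i is {i}, weight is card,
  and the inner product <u,v> is card (u \<inter> v) mod 2. Colors are 0..N-1.\<close>

definition vsum :: "nat set \<Rightarrow> nat set \<Rightarrow> nat set" where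
  "vsum u v = (u - v) \<union> (v - u)"

definition ip :: "nat set \<Rightarrow> nat set \<Rightarrow> nat" where
  "ip u v = card (u \<inter> v) mod 2"

definition doubly_even_code :: "nat \<Rightarrow> nat \<Rightarrow> nat set set \<Rightarrow> bool" where
  "doubly_even_code N k C \<longleftrightarrow>
     C \<subseteq> Pow {..<N} \<and> {} \<in> C \<and> (\<forall>u\<in>C. \<forall>v\<in>C. vsum u v \<in> C) \<and>
     card C = 2 ^ k \<and> (\<forall>c\<in>C. 4 dvd card c)"

definition coset :: "nat set set \<Rightarrow> nat set \<Rightarrow> nat set set" where
  "coset C x = (\<lambda>c. vsum x c) ` C"

definition verts :: "nat \<Rightarrow> nat set set \<Rightarrow> nat set set set" where
  "verts N C = coset C ` Pow {..<N}"

definition nbr :: "nat \<Rightarrow> nat set set \<Rightarrow> nat set set" where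
  "nbr i v = (\<lambda>y. vsum y {i}) ` v"

text \<open>An edge parity on the quotient graph: the edge of color i at vertex v is
  identified with the pair (v,i); pi v i = True means dashed. It must be well defined
  on edges (same value seen from both endpoints), and every 2-colored 4-cycle
  v, v+e_i, v+e_i+e_j, v+e_j (the unique (i,j,i,j) 4-cycle through any (i,j)-path)
  has an odd number of dashed edges.\<close>
definition adinkra_dashing :: "nat \<Rightarrow> nat set set \<Rightarrow> (nat set set \<Rightarrow> nat \<Rightarrow> bool) \<Rightarrow> bool" where
  "adinkra_dashing N C \<pi> \<longleftrightarrow>
     (\<forall>v\<in>verts N C. \<forall>i<N. \<pi> (nbr i v) i = \<pi> v i) \<and>
     (\<forall>v\<in>verts N C. \<forall>i<N. \<forall>j<N. i \<noteq> j \<longrightarrow>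
        odd (of_bool (\<pi> v i) + of_bool (\<pi> (nbr i v) j) + of_bool (\<pi> (nbr j v) i)
             + of_bool (\<pi> v j) :: nat))"

text \<open>gamma_i as a V x V matrix: entry +1/-1 for a solid/dashed color-i edge, 0 otherwise.
  (Its off-diagonal blocks are L_i and L_i^T.)\<close>
definition gamma :: "(nat set set \<Rightarrow> nat \<Rightarrow> bool) \<Rightarrow> nat \<Rightarrow> nat set set \<Rightarrow> nat set set \<Rightarrow> int" where
  "gamma \<pi> i u v = (if v = nbr i u then (if \<pi> u i then -1 else 1) else 0)"

definition mmult :: "'v set \<Rightarrow> ('v \<Rightarrow> 'v \<Rightarrow> int) \<Rightarrow> ('v \<Rightarrow> 'v \<Rightarrow> int) \<Rightarrow> 'v \<Rightarrow> 'v \<Rightarrow> int" where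
  "mmult V A B u w = (\<Sum>v\<in>V. A u v * B v w)"

fun gprod :: "nat \<Rightarrow> nat set set \<Rightarrow> (nat set set \<Rightarrow> nat \<Rightarrow> bool) \<Rightarrow> nat list \<Rightarrow> nat set set \<Rightarrow> nat set set \<Rightarrow> int" where
  "gprod N C \<pi> [] = (\<lambda>u v. if u = v then 1 else 0)"
| "gprod N C \<pi> (i # is) = mmult (verts N C) (gamma \<pi> i) (gprod N C \<pi> is)"

definition odd_colors :: "nat \<Rightarrow> nat list \<Rightarrow> nat set" where
  "odd_colors N is = {i. i < N \<and> odd (count_list is i)}"

end

theory Submission
  imports Defs
begin

definition sg :: "bool \<Rightarrow> int" where "sg b = (if b then -1 else 1)"

fun walk :: "nat list \<Rightarrow> nat set set \<Rightarrow> nat set set" where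
  "walk [] v = v"
| "walk (i # is) v = walk is (nbr i v)"

fun sgn :: "(nat set set \<Rightarrow> nat \<Rightarrow> bool) \<Rightarrow> nat list \<Rightarrow> nat set set \<Rightarrow> int" where
  "sgn \<pi> [] v = 1"
| "sgn \<pi> (i # is) v = sg (\<pi> v i) * sgn \<pi> is (nbr i v)"

lemma sg_sq[simp]: "sg b * sg b = 1" by (simp add: sg_def)

lemma sgn_sq: "sgn \<pi> w v * sgn \<pi> w v = 1"
proof (induction w arbitrary: v)
  case Nil then show ?case by simp
next
  case (Cons i w)
  have "sgn \<pi> (i#w) v * sgn \<pi> (i#w) v = (sg (\<pi> v i) * sg (\<pi> v i)) * (sgn \<pi> w (nbr i v) * sgn \<pi> w (nbr i v))"
    by (simp add: algebra_simps)
  then show ?case using Cons by simp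
qed

lemma vsum_assoc: "vsum (vsum a b) c = vsum a (vsum b c)"
  unfolding vsum_def by blast
lemma vsum_comm: "vsum a b = vsum b a"
  unfolding vsum_def by blast
lemma vsum_self: "vsum (vsum a b) b = a"
  unfolding vsum_def by blast

lemma nbr_coset: "nbr i (coset C x) = coset C (vsum x {i})"
  unfolding nbr_def coset_def image_image
  by (rule image_cong) (auto simp: vsum_assoc vsum_comm[of "{i}"])

lemma nbr_comm: "nbr i (nbr j v) = nbr j (nbr i v)"
  unfolding nbr_def image_image by (rule image_cong) (auto simp: vsum_assoc vsum_comm[of "{i}"])

lemma nbr_nbr[simp]: "nbr i (nbr i v) = v"
  unfolding nbr_def image_image by (simp add: vsum_self)

lemma nbr_verts: "v \<in> verts N C \<Longrightarrow> i < N \<Longrightarrow> nbr i v \<in> verts N C"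
  unfolding verts_def by (auto simp: nbr_coset vsum_def)

lemma finite_verts: "finite (verts N C)"
  unfolding verts_def by simp

lemma gprod_walk:
  assumes "v \<in> verts N C" "set w \<subseteq> {..<N}"
  shows "gprod N C \<pi> w v z = (if z = walk w v then sgn \<pi> w v else 0)"
  using assms
proof (induction w arbitrary: v)
  case Nil then show ?case by simp
next
  case (Cons i w)
  have nv: "nbr i v \<in> verts N C" using Cons nbr_verts by auto
  have "gprod N C \<pi> (i#w) v z = (\<Sum>u\<in>verts N C. gamma \<pi> i v u * gprod N C \<pi> w u z)"
    by (simp add: mmult_def)
  also have "\<dots> = (\<Sum>u\<in>verts N C. if u = nbr i v then sg (\<pi> v i) * gprod N C \<pi> w (nbr i v) z else 0)"
    by (rule sum.cong) (auto simp: gamma_def sg_def)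
  also have "\<dots> = sg (\<pi> v i) * gprod N C \<pi> w (nbr i v) z"
    using nv finite_verts by (simp add: sum.delta')
  also have "\<dots> = (if z = walk (i#w) v then sgn \<pi> (i#w) v else 0)"
    using Cons.IH[OF nv] Cons.prems by simp
  finally show ?case .
qed

lemma odd_colors_Cons: "i < N \<Longrightarrow> odd_colors N (i # is) = vsum {i} (odd_colors N is)"
  unfolding odd_colors_def vsum_def by auto

lemma walk_coset:
  assumes "set w \<subseteq> {..<N}"
  shows "walk w (coset C x) = coset C (vsum x (odd_colors N w))"
  using assms
proof (induction w arbitrary: x)
  case Nil
  have "vsum x (odd_colors N []) = x" by (simp add: odd_colors_def vsum_def)
  then show ?case by simp
next
  case (Cons i w)
  then show ?case by (simp add: nbr_coset odd_colors_Cons vsum_assoc)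
qed

lemma coset_code:
  assumes "\<forall>u\<in>C. \<forall>v\<in>C. vsum u v \<in> C" "p \<in> C"
  shows "coset C (vsum x p) = coset C x"
  unfolding coset_def
proof
  show "(\<lambda>c. vsum (vsum x p) c) ` C \<subseteq> (\<lambda>c. vsum x c) ` C"
    using assms by (auto simp: vsum_assoc)
  show "(\<lambda>c. vsum x c) ` C \<subseteq> (\<lambda>c. vsum (vsum x p) c) ` C"
  proof
    fix z assume "z \<in> (\<lambda>c. vsum x c) ` C"
    then obtain c where c: "c \<in> C" "z = vsum x c" by auto
    have "vsum p c \<in> C" using assms c by auto
    moreover have "z = vsum (vsum x p) (vsum p c)"
      using c by (metis vsum_assoc vsum_comm vsum_self)
    ultimately show "z \<in> (\<lambda>c. vsum (vsum x p) c) ` C" by blast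
  qed
qed

lemma walk_nbr: "walk w (nbr j v) = nbr j (walk w v)"
proof (induction w arbitrary: v)
  case Nil then show ?case by simp
next
  case (Cons i w) then show ?case by (simp add: nbr_comm[of i j])
qed

lemma local_sq:
  assumes adk: "adinkra_dashing N C \<pi>" and v: "v \<in> verts N C" and ij: "i < N" "j < N"
  shows "sg (\<pi> (nbr j v) i) * sg (\<pi> v i) = (if i = j then 1 else -1) * sg (\<pi> v j) * sg (\<pi> (nbr i v) j)"
proof (cases "i = j")
  case True
  then have "\<pi> (nbr j v) j = \<pi> v j" using adk v ij unfolding adinkra_dashing_def by auto
  then show ?thesis using True by (simp add: sg_def)
next
  case False
  then have "odd (of_bool (\<pi> v i) + of_bool (\<pi> (nbr i v) j) + of_bool (\<pi> (nbr j v) i)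
             + of_bool (\<pi> v j) :: nat)" using adk v ij unfolding adinkra_dashing_def by auto
  then show ?thesis using False
    by (cases "\<pi> v i"; cases "\<pi> (nbr i v) j"; cases "\<pi> (nbr j v) i"; cases "\<pi> v j"; simp add: sg_def)
qed

lemma telescope:
  assumes adk: "adinkra_dashing N C \<pi>" and "v \<in> verts N C" "set w \<subseteq> {..<N}" "j < N"
  shows "sgn \<pi> w (nbr j v) * sgn \<pi> w v
     = (-1) ^ length (filter (\<lambda>i. i \<noteq> j) w) * sg (\<pi> v j) * sg (\<pi> (walk w v) j)"
  using assms(2,3)
proof (induction w arbitrary: v)
  case Nil then show ?case by simp
next
  case (Cons i w)
  have i: "i < N" using Cons by auto
  have nv: "nbr i v \<in> verts N C" using Cons nbr_verts i by auto
  have IH: "sgn \<pi> w (nbr j (nbr i v)) * sgn \<pi> w (nbr i v)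
     = (-1) ^ length (filter (\<lambda>i. i \<noteq> j) w) * sg (\<pi> (nbr i v) j) * sg (\<pi> (walk w (nbr i v)) j)"
    using Cons nv by auto
  have L: "sg (\<pi> (nbr j v) i) * sg (\<pi> v i) = (if i = j then 1 else -1) * sg (\<pi> v j) * sg (\<pi> (nbr i v) j)"
    using local_sq[OF adk Cons.prems(1) i assms(4)] .
  have "sgn \<pi> (i#w) (nbr j v) * sgn \<pi> (i#w) v
     = (sg (\<pi> (nbr j v) i) * sg (\<pi> v i)) * (sgn \<pi> w (nbr j (nbr i v)) * sgn \<pi> w (nbr i v))"
    by (simp add: nbr_comm algebra_simps)
  also have "\<dots> = (if i = j then 1 else -1) * sg (\<pi> v j) * (sg (\<pi> (nbr i v) j) * sg (\<pi> (nbr i v) j))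
      * (-1) ^ length (filter (\<lambda>i. i \<noteq> j) w) * sg (\<pi> (walk w (nbr i v)) j)"
    unfolding L IH by (simp add: algebra_simps)
  also have "\<dots> = (-1) ^ length (filter (\<lambda>i. i \<noteq> j) (i#w)) * sg (\<pi> v j) * sg (\<pi> (walk (i#w) v) j)"
    by simp
  finally show ?case .
qed

lemma len_parity: "set w \<subseteq> {..<N} \<Longrightarrow> even (length w + card (odd_colors N w))"
proof (induction w)
  case Nil then show ?case by (simp add: odd_colors_def)
next
  case (Cons i w)
  have fin: "finite (odd_colors N w)" unfolding odd_colors_def by simp
  have "card (vsum {i} (odd_colors N w)) =
     (if i \<in> odd_colors N w then card (odd_colors N w) - 1 else card (odd_colors N w) + 1)"
  proof (cases "i \<in> odd_colors N w")
    case True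
    then have "vsum {i} (odd_colors N w) = odd_colors N w - {i}" unfolding vsum_def by auto
    then show ?thesis using True fin by simp
  next
    case False
    then have "vsum {i} (odd_colors N w) = insert i (odd_colors N w)" unfolding vsum_def by auto
    then show ?thesis using False fin by simp
  qed
  moreover have "i \<in> odd_colors N w \<Longrightarrow> card (odd_colors N w) \<ge> 1"
    using fin by (metis One_nat_def Suc_leI card_gt_0_iff empty_iff)
  ultimately show ?case using Cons by (auto simp: odd_colors_Cons)
qed

lemma filter_count: "length (filter (\<lambda>i. i \<noteq> j) w) + count_list w j = length w"
  by (induction w) auto

theorem mainTheorem13:
  fixes N k :: nat and C :: "nat set set" and \<pi> :: "nat set set \<Rightarrow> nat \<Rightarrow> bool"
    and cols :: "nat list"
  assumes code: "doubly_even_code N k C"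
    and adk: "adinkra_dashing N C \<pi>"
    and cols_ok: "set cols \<subseteq> {..<N}"
    and p_code: "odd_colors N cols \<in> C"
    and p_nz: "odd_colors N cols \<noteq> {}"
    and diag: "\<forall>v\<in>verts N C. gprod N C \<pi> cols v v = 1 \<or> gprod N C \<pi> cols v v = -1"
    and x: "x \<subseteq> {..<N}" and y: "y \<subseteq> {..<N}"
  shows "gprod N C \<pi> cols (coset C x) (coset C x) = gprod N C \<pi> cols (coset C y) (coset C y)
         \<longleftrightarrow> ip x (odd_colors N cols) = ip y (odd_colors N cols)"
proof -
  define P where "P = odd_colors N cols"
  have clos: "\<forall>u\<in>C. \<forall>v\<in>C. vsum u v \<in> C" using code unfolding doubly_even_code_def by auto
  have walkc: "walk cols (coset C z) = coset C z" for z
    using walk_coset[OF cols_ok] coset_code[OF clos p_code] by simp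
  have vz: "z \<subseteq> {..<N} \<Longrightarrow> coset C z \<in> verts N C" for z unfolding verts_def by auto
  have diagv: "z \<subseteq> {..<N} \<Longrightarrow> gprod N C \<pi> cols (coset C z) (coset C z) = sgn \<pi> cols (coset C z)" for z
    using gprod_walk[OF vz cols_ok] walkc by simp
  have evlen: "even (length cols)"
  proof -
    have "4 dvd card P" using code p_code unfolding doubly_even_code_def P_def by auto
    then have "even (card P)" by (metis dvd_trans even_numeral)
    then show ?thesis using len_parity[OF cols_ok] unfolding P_def by simp
  qed
  have step: "sgn \<pi> cols (nbr j u) = (if j \<in> P then -1 else 1) * sgn \<pi> cols u"
    if u: "u \<in> verts N C" "walk cols u = u" and j: "j < N" for u j
  proof -
    have T: "sgn \<pi> cols (nbr j u) * sgn \<pi> cols u = (-1) ^ length (filter (\<lambda>i. i \<noteq> j) cols)"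
      using telescope[OF adk u(1) cols_ok j] u(2) by simp
    have "(-1::int) ^ length (filter (\<lambda>i. i \<noteq> j) cols) = (if j \<in> P then -1 else 1)"
    proof -
      have "even (length (filter (\<lambda>i. i \<noteq> j) cols)) \<longleftrightarrow> even (count_list cols j)"
        using filter_count[of j cols] evlen by (metis even_add)
      moreover have "j \<in> P \<longleftrightarrow> odd (count_list cols j)" using j unfolding P_def odd_colors_def by auto
      ultimately show ?thesis by auto
    qed
    with T have "sgn \<pi> cols (nbr j u) * sgn \<pi> cols u * sgn \<pi> cols u = (if j \<in> P then -1 else 1) * sgn \<pi> cols u"
      by simp
    then show ?thesis by (simp add: mult.assoc sgn_sq)
  qed
  have formula: "z \<subseteq> {..<N} \<Longrightarrow> sgn \<pi> cols (coset C z) = sgn \<pi> cols (coset C {}) * (-1) ^ card (z \<inter> P)" for z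
  proof -
    assume zs: "z \<subseteq> {..<N}"
    have "finite z" using zs finite_subset by blast
    then show ?thesis using zs
    proof (induction z rule: finite_induct)
      case empty then show ?case by simp
    next
      case (insert j z)
      have j: "j < N" using insert by auto
      have zs': "z \<subseteq> {..<N}" using insert by auto
      have "vsum z {j} = insert j z" using insert unfolding vsum_def by auto
      then have e: "coset C (insert j z) = nbr j (coset C z)" by (simp add: nbr_coset)
      have fz: "finite (z \<inter> P)" using insert by simp
      have c: "card (insert j z \<inter> P) = (if j \<in> P then Suc (card (z \<inter> P)) else card (z \<inter> P))"
        using insert fz by (auto simp: Int_insert_left)
      show ?case unfolding e step[OF vz[OF zs'] walkc j] insert.IH[OF zs'] c by simp
    qed
  qed
  have s0: "sgn \<pi> cols (coset C {}) \<noteq> 0" using sgn_sq[of \<pi> cols "coset C {}"] by auto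
  have pw: "((-1::int) ^ a = (-1) ^ b) \<longleftrightarrow> a mod 2 = b mod 2" for a b :: nat
    by (cases "even a"; cases "even b") (auto simp: odd_iff_mod_2_eq_one even_iff_mod_2_eq_zero)
  show ?thesis
    unfolding diagv[OF x] diagv[OF y] formula[OF x] formula[OF y] ip_def P_def[symmetric]
    using s0 pw by simp
qed

end
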